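(* Let $0<\alpha<\beta<1$, let $\theta_1\in[0,1)$ and let $F_1\subset V(\theta_1)$ be a linear subspace with $\dim F_1=k$. For every $\varepsilon>0$ there exists $\delta>0$ such that for every $\theta_2\in[0,1)$ with $|\theta_2-\theta_1|\le\delta$ there exists a linear subspace $F_2\subset V(\theta_2)$ with $\dim F_2=k$ and $\max\{\mathrm{dist}(F_1,F_2),\mathrm{dist}(F_2,F_1)\}<\varepsilon$.
   Context: $Q=(0,1)$, $Q_1=(0,\alpha)\cup(\beta,1)$. Let $p$ be a $1$-periodic measurable function with $p>0$, $p,p^{-1}\in L^\infty(0,1)$. For $\theta\in[0,1)$, $H^1_\theta(Q)=\{u\in H^1(0,1):u(1)=e^{2\pi i\theta}u(0)\}$ and $V(\theta)=\{v\in H^1_\theta(Q):p v'=0\text{ a.e. on }Q_1\}$. For linear subspaces $N,M$ of $H^1(0,1)$, $\mathrm{dist}(N,M):=\sup_{u\in N,\ \|u\|_{H^1}=1}\ \inf_{v\in M}\|u-v\|_{H^1}$. *)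

theory Defs
  imports "HOL-Analysis.Analysis" "HOL-Library.Function_Algebras"
begin

text \<open>Elements of H^1(0,1) (complex-valued) are represented by their continuous
 representative on [0,1], extended by 0 outside [0,1]. u is in H^1 iff
 u x = u 0 + integral of g over [0,x] for some square-integrable g (the weak derivative).\<close>

definition is_weak_deriv :: "(real \<Rightarrow> complex) \<Rightarrow> (real \<Rightarrow> complex) \<Rightarrow> bool" where
  "is_weak_deriv u g \<longleftrightarrow> g \<in> borel_measurable lborel \<and>
     set_integrable lborel {0..1::real} (\<lambda>t. (cmod (g t))\<^sup>2) \<and>
     (\<forall>x\<in>{0..1}. u x = u 0 + (LINT t:{0..x}|lborel. g t))"

definition H1 :: "(real \<Rightarrow> complex) set" where
  "H1 = {u. (\<forall>x. x \<notin> {0..1} \<longrightarrow> u x = 0) \<and>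
            set_integrable lborel {0..1::real} (\<lambda>t. (cmod (u t))\<^sup>2) \<and>
            (\<exists>g. is_weak_deriv u g)}"

definition h1deriv :: "(real \<Rightarrow> complex) \<Rightarrow> (real \<Rightarrow> complex)" where
  "h1deriv u = (SOME g. is_weak_deriv u g)"

definition H1norm :: "(real \<Rightarrow> complex) \<Rightarrow> real" where
  "H1norm u = sqrt ((LINT t:{0..1}|lborel. (cmod (u t))\<^sup>2)
                   + (LINT t:{0..1}|lborel. (cmod (h1deriv u t))\<^sup>2))"

definition H1theta :: "real \<Rightarrow> (real \<Rightarrow> complex) set" where
  "H1theta \<theta> = {u \<in> H1. u 1 = exp (2 * pi * \<i> * complex_of_real \<theta>) * u 0}"

definition Q1 :: "real \<Rightarrow> real \<Rightarrow> real set" where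
  "Q1 \<alpha> \<beta> = {0<..<\<alpha>} \<union> {\<beta><..<1}"

definition Vspace :: "(real \<Rightarrow> real) \<Rightarrow> real \<Rightarrow> real \<Rightarrow> real \<Rightarrow> (real \<Rightarrow> complex) set" where
  "Vspace p \<alpha> \<beta> \<theta> = {v \<in> H1theta \<theta>.
      AE t in lborel. t \<in> Q1 \<alpha> \<beta> \<longrightarrow> complex_of_real (p t) * h1deriv v t = 0}"

definition cscale :: "complex \<Rightarrow> (real \<Rightarrow> complex) \<Rightarrow> (real \<Rightarrow> complex)" where
  "cscale c f = (\<lambda>x. c * f x)"

definition lin_subspace :: "(real \<Rightarrow> complex) set \<Rightarrow> bool" where
  "lin_subspace F \<longleftrightarrow> module.subspace cscale F"

definition has_dim :: "(real \<Rightarrow> complex) set \<Rightarrow> nat \<Rightarrow> bool" where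
  "has_dim F k \<longleftrightarrow> (\<exists>B. finite B \<and> card B = k \<and> \<not> module.dependent cscale B
                        \<and> module.span cscale B = F)"

definition subsp_dist :: "(real \<Rightarrow> complex) set \<Rightarrow> (real \<Rightarrow> complex) set \<Rightarrow> real" where
  "subsp_dist N M = (if {u \<in> N. H1norm u = 1} = {} then 0
     else (SUP u\<in>{u \<in> N. H1norm u = 1}. INF v\<in>M. H1norm (u - v)))"

end

theory Submission
  imports Defs
begin


lemma sq_int_imp_int:
  fixes g :: "real \<Rightarrow> complex"
  assumes m: "g \<in> borel_measurable lborel" and s: "set_integrable lborel {a..b} (\<lambda>t. (cmod (g t))\<^sup>2)"
  shows "set_integrable lborel {a..b} g"
  unfolding set_integrable_def
proof (rule Bochner_Integration.integrable_bound)
  have i1: "integrable lborel (\<lambda>x. indicator {a..b} x *\<^sub>R (1::real))"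
  proof -
    have "emeasure lborel {a..b} < \<infinity>" by (simp add: emeasure_lborel_Icc_eq)
    then show ?thesis by simp
  qed
  show "integrable lborel (\<lambda>x. indicator {a..b} x *\<^sub>R (1 + (cmod (g x))\<^sup>2))"
    using Bochner_Integration.integrable_add[OF i1 s[unfolded set_integrable_def]]
    by (simp add: algebra_simps scaleR_add_right)
  show "(\<lambda>x. indicat_real {a..b} x *\<^sub>R g x) \<in> borel_measurable lborel"
    using m by measurable
  show "AE x in lborel. norm (indicat_real {a..b} x *\<^sub>R g x) \<le> norm (indicator {a..b} x *\<^sub>R (1 + (cmod (g x))\<^sup>2))"
  proof (intro AE_I2)
    fix x
    have "cmod (g x) \<le> 1 + (cmod (g x))\<^sup>2"
    proof -
      have "0 \<le> (cmod (g x) - 1/2)\<^sup>2" by simp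
      then show ?thesis by (simp add: power2_eq_square algebra_simps)
    qed
    then show "norm (indicat_real {a..b} x *\<^sub>R g x) \<le> norm (indicator {a..b} x *\<^sub>R (1 + (cmod (g x))\<^sup>2))"
      by (auto simp: indicator_def)
  qed
qed


lemma ae_zero_real:
  fixes h :: "real \<Rightarrow> real"
  assumes hm[measurable]: "h \<in> borel_measurable lborel"
  and hi: "set_integrable lborel {0..1} h"
  and z: "\<forall>x\<in>{0..1}. (LINT t:{0..x}|lborel. h t) = 0"
  shows "AE t in lborel. t \<in> {0..1} \<longrightarrow> h t = 0"
proof -
  have zS: "(LINT t:({x<..}\<inter>{0..1})|lborel. h t) = 0" for x
  proof (cases "x < 0")
    case True
    then have "{x<..}\<inter>{0..1} = {0..1::real}" by auto
    then show ?thesis using z by auto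
  next
    case False
    show ?thesis
    proof (cases "x < 1")
      case True
      have e: "{x<..}\<inter>{0..1} = {x<..1::real}" using False by auto
      have u: "{0..1} = {0..x} \<union> {x<..1::real}" using False True by auto
      have i1: "set_integrable lborel {0..x} h"
        by (rule set_integrable_subset[OF hi]) (use True in auto)
      have i2: "set_integrable lborel {x<..1} h"
        by (rule set_integrable_subset[OF hi]) (use False in auto)
      have "(LINT t:{0..1}|lborel. h t) = (LINT t:{0..x}|lborel. h t) + (LINT t:{x<..1}|lborel. h t)"
        unfolding u by (rule set_integral_Un[OF _ i1 i2]) auto
      then show ?thesis using z False True e by auto
    next
      case False2: False
      then have "{x<..}\<inter>{0..1} = ({}::real set)" by auto
      then show ?thesis by (simp add: set_lebesgue_integral_def)
    qed
  qed
  define f where "f t = ennreal (indicator {0..1} t * max 0 (h t))" for t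
  define g where "g t = ennreal (indicator {0..1} t * max 0 (- h t))" for t
  have fm[measurable]: "f \<in> borel_measurable lborel" unfolding f_def by measurable
  have gm[measurable]: "g \<in> borel_measurable lborel" unfolding g_def by measurable
  have emS: "emeasure (density lborel f) {x<..} = ennreal (LINT t:({x<..}\<inter>{0..1})|lborel. max 0 (h t))"
    and emS': "emeasure (density lborel g) {x<..} = ennreal (LINT t:({x<..}\<inter>{0..1})|lborel. max 0 (- h t))"
    and eqS: "(LINT t:({x<..}\<inter>{0..1})|lborel. max 0 (h t)) = (LINT t:({x<..}\<inter>{0..1})|lborel. max 0 (- h t))"
    for x
  proof -
    have hS: "set_integrable lborel ({x<..}\<inter>{0..1}) h"
      by (rule set_integrable_subset[OF hi]) auto
    have i1: "set_integrable lborel ({x<..}\<inter>{0..1}) (\<lambda>t. max 0 (h t))"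
      using hS unfolding set_integrable_def
      by (rule Bochner_Integration.integrable_bound) (auto simp: indicator_def)
    have i2: "set_integrable lborel ({x<..}\<inter>{0..1}) (\<lambda>t. max 0 (- h t))"
      using hS unfolding set_integrable_def
      by (rule Bochner_Integration.integrable_bound) (auto simp: indicator_def)
    have "(LINT t:({x<..}\<inter>{0..1})|lborel. max 0 (h t) - max 0 (- h t)) = (LINT t:({x<..}\<inter>{0..1})|lborel. h t)"
      by (rule set_lebesgue_integral_cong) auto
    then show "(LINT t:({x<..}\<inter>{0..1})|lborel. max 0 (h t)) = (LINT t:({x<..}\<inter>{0..1})|lborel. max 0 (- h t))"
      using set_integral_diff(2)[OF i1 i2] zS[of x] by simp
    have "emeasure (density lborel f) {x<..} = (\<integral>\<^sup>+ t. f t * indicator {x<..} t \<partial>lborel)"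
      by (rule emeasure_density) auto
    also have "\<dots> = (\<integral>\<^sup>+ t. ennreal (indicator ({x<..}\<inter>{0..1}) t *\<^sub>R max 0 (h t)) \<partial>lborel)"
      by (rule nn_integral_cong) (auto simp: f_def indicator_def)
    also have "\<dots> = ennreal (LINT t:({x<..}\<inter>{0..1})|lborel. max 0 (h t))"
      unfolding set_lebesgue_integral_def
      by (rule nn_integral_eq_integral) (use i1 in \<open>auto simp: set_integrable_def\<close>)
    finally show "emeasure (density lborel f) {x<..} = ennreal (LINT t:({x<..}\<inter>{0..1})|lborel. max 0 (h t))" .
    have "emeasure (density lborel g) {x<..} = (\<integral>\<^sup>+ t. g t * indicator {x<..} t \<partial>lborel)"
      by (rule emeasure_density) auto
    also have "\<dots> = (\<integral>\<^sup>+ t. ennreal (indicator ({x<..}\<inter>{0..1}) t *\<^sub>R max 0 (- h t)) \<partial>lborel)"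
      by (rule nn_integral_cong) (auto simp: g_def indicator_def)
    also have "\<dots> = ennreal (LINT t:({x<..}\<inter>{0..1})|lborel. max 0 (- h t))"
      unfolding set_lebesgue_integral_def
      by (rule nn_integral_eq_integral) (use i2 in \<open>auto simp: set_integrable_def\<close>)
    finally show "emeasure (density lborel g) {x<..} = ennreal (LINT t:({x<..}\<inter>{0..1})|lborel. max 0 (- h t))" .
  qed
  have "density lborel f = density lborel g"
    by (rule measure_eqI_lessThan) (auto simp: emS emS' eqS)
  then have "AE t in lborel. f t = g t"
    using sigma_finite_measure.density_unique_iff[OF sigma_finite_lborel fm gm] by simp
  then show ?thesis
  proof (rule AE_mp, intro AE_I2 impI)
    fix t assume "f t = g t" "t \<in> {0..1::real}"
    then have "max 0 (h t) = max 0 (- h t)" by (auto simp: f_def g_def)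
    then show "h t = 0" by (auto simp: max_def split: if_splits)
  qed
qed


lemma set_integral_Re_eq: "set_integrable M A h \<Longrightarrow> (LINT t:A|M. Re (h t)) = Re (LINT t:A|M. (h t::complex))"
  and set_integral_Im_eq: "set_integrable M A h \<Longrightarrow> (LINT t:A|M. Im (h t)) = Im (LINT t:A|M. (h t::complex))"
proof -
  have e: "(\<lambda>t. indicator A t *\<^sub>R Re (h t)) = (\<lambda>t. Re (indicator A t *\<^sub>R h t))"
    "(\<lambda>t. indicator A t *\<^sub>R Im (h t)) = (\<lambda>t. Im (indicator A t *\<^sub>R h t))" by auto
  show "set_integrable M A h \<Longrightarrow> (LINT t:A|M. Re (h t)) = Re (LINT t:A|M. (h t::complex))"
    unfolding set_lebesgue_integral_def e(1) by (rule integral_Re) (simp add: set_integrable_def)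
  show "set_integrable M A h \<Longrightarrow> (LINT t:A|M. Im (h t)) = Im (LINT t:A|M. (h t::complex))"
    unfolding set_lebesgue_integral_def e(2) by (rule integral_Im) (simp add: set_integrable_def)
qed

lemma set_integrable_Re_Im:
  assumes "set_integrable M A (h :: _ \<Rightarrow> complex)"
  shows "set_integrable M A (\<lambda>t. Re (h t))" "set_integrable M A (\<lambda>t. Im (h t))"
proof -
  have e: "(\<lambda>t. indicator A t *\<^sub>R Re (h t)) = (\<lambda>t. Re (indicator A t *\<^sub>R h t))"
    "(\<lambda>t. indicator A t *\<^sub>R Im (h t)) = (\<lambda>t. Im (indicator A t *\<^sub>R h t))" by auto
  show "set_integrable M A (\<lambda>t. Re (h t))"
    unfolding set_integrable_def e(1) by (rule integrable_Re) (use assms in \<open>simp add: set_integrable_def\<close>)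
  show "set_integrable M A (\<lambda>t. Im (h t))"
    unfolding set_integrable_def e(2) by (rule integrable_Im) (use assms in \<open>simp add: set_integrable_def\<close>)
qed

lemma ae_zero_complex:
  fixes h :: "real \<Rightarrow> complex"
  assumes hm[measurable]: "h \<in> borel_measurable lborel"
  and hi: "set_integrable lborel {0..1} h"
  and z: "\<forall>x\<in>{0..1}. (LINT t:{0..x}|lborel. h t) = 0"
  shows "AE t in lborel. t \<in> {0..1} \<longrightarrow> h t = 0"
proof -
  have hx: "set_integrable lborel {0..x} h" if "x \<in> {0..1}" for x
    by (rule set_integrable_subset[OF hi]) (use that in auto)
  have "AE t in lborel. t \<in> {0..1} \<longrightarrow> Re (h t) = 0"
    by (rule ae_zero_real) (use z hx set_integrable_Re_Im[OF hi] in \<open>auto simp: set_integral_Re_eq\<close>)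
  moreover have "AE t in lborel. t \<in> {0..1} \<longrightarrow> Im (h t) = 0"
    by (rule ae_zero_real) (use z hx set_integrable_Re_Im[OF hi] in \<open>auto simp: set_integral_Im_eq\<close>)
  ultimately show ?thesis by eventually_elim (auto simp: complex_eq_iff)
qed


lemma wd_meas: "is_weak_deriv u g \<Longrightarrow> g \<in> borel_measurable lborel"
  by (simp add: is_weak_deriv_def)

lemma wd_int: "is_weak_deriv u g \<Longrightarrow> {a..b} \<subseteq> {0..1} \<Longrightarrow> set_integrable lborel {a..b} g"
proof -
  assume a: "is_weak_deriv u g" "{a..b} \<subseteq> {0..1}"
  have s: "set_integrable lborel {0..1} g"
    by (rule sq_int_imp_int) (use a in \<open>auto simp: is_weak_deriv_def\<close>)
  show ?thesis by (rule set_integrable_subset[OF s]) (use a in auto)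
qed

lemma wd_unique:
  assumes "is_weak_deriv u g1" "is_weak_deriv u g2"
  shows "AE t in lborel. t \<in> {0..1} \<longrightarrow> g1 t = g2 t"
proof -
  have m1[measurable]: "g1 \<in> borel_measurable lborel"
    using assms(1) by (simp add: is_weak_deriv_def)
  have m2[measurable]: "g2 \<in> borel_measurable lborel"
    using assms(2) by (simp add: is_weak_deriv_def)
  have i01: "set_integrable lborel {0..1} g1" "set_integrable lborel {0..1} g2"
    using wd_int[OF assms(1), of 0 1] wd_int[OF assms(2), of 0 1] by auto
  have "AE t in lborel. t \<in> {0..1} \<longrightarrow> g1 t - g2 t = 0"
  proof (rule ae_zero_complex)
    show "(\<lambda>t. g1 t - g2 t) \<in> borel_measurable lborel" by measurable
    show "set_integrable lborel {0..1} (\<lambda>t. g1 t - g2 t)"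
      by (rule set_integral_diff(1)[OF i01])
    show "\<forall>x\<in>{0..1}. (LINT t:{0..x}|lborel. g1 t - g2 t) = 0"
    proof
      fix x :: real assume x: "x \<in> {0..1}"
      have i1: "set_integrable lborel {0..x} g1" "set_integrable lborel {0..x} g2"
        using wd_int[OF assms(1), of 0 x] wd_int[OF assms(2), of 0 x] x by auto
      have e: "u x = u 0 + (LINT t:{0..x}|lborel. g1 t)" "u x = u 0 + (LINT t:{0..x}|lborel. g2 t)"
        using assms x unfolding is_weak_deriv_def by blast+
      have "(LINT t:{0..x}|lborel. g1 t - g2 t) = (LINT t:{0..x}|lborel. g1 t) - (LINT t:{0..x}|lborel. g2 t)"
        by (rule set_integral_diff(2)[OF i1])
      also have "\<dots> = 0" using e by simp
      finally show "(LINT t:{0..x}|lborel. g1 t - g2 t) = 0" .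
    qed
  qed
  then show ?thesis by (rule AE_mp) (intro AE_I2, auto)
qed

lemma H1_wd: "u \<in> H1 \<Longrightarrow> is_weak_deriv u (h1deriv u)"
  unfolding H1_def h1deriv_def by (auto intro: someI[where P="is_weak_deriv u"])

lemma H1norm_wd:
  assumes "is_weak_deriv u g"
  shows "H1norm u = sqrt ((LINT t:{0..1}|lborel. (cmod (u t))\<^sup>2) + (LINT t:{0..1}|lborel. (cmod (g t))\<^sup>2))"
proof -
  have w: "is_weak_deriv u (h1deriv u)"
    unfolding h1deriv_def by (rule someI[where P="is_weak_deriv u", OF assms])
  have m1[measurable]: "h1deriv u \<in> borel_measurable lborel"
    using w by (simp add: is_weak_deriv_def)
  have m2[measurable]: "g \<in> borel_measurable lborel"
    using assms by (simp add: is_weak_deriv_def)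
  have "(LINT t:{0..1}|lborel. (cmod (h1deriv u t))\<^sup>2) = (LINT t:{0..1}|lborel. (cmod (g t))\<^sup>2)"
  proof (rule set_lebesgue_integral_cong_AE)
    show "{0..1::real} \<in> sets lborel" by simp
    show "(\<lambda>t. (cmod (h1deriv u t))\<^sup>2) \<in> borel_measurable lborel" by measurable
    show "(\<lambda>t. (cmod (g t))\<^sup>2) \<in> borel_measurable lborel" by measurable
    show "AE x\<in>{0..1} in lborel. (cmod (h1deriv u x))\<^sup>2 = (cmod (g x))\<^sup>2"
      using wd_unique[OF w assms] by eventually_elim simp
  qed
  then show ?thesis unfolding H1norm_def by simp
qed

lemma wd_cont:
  assumes "is_weak_deriv u g"
  shows "continuous_on {0..1} u"
proof -
  have gi0: "set_integrable lborel {0..1} g" using wd_int[OF assms] by simp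
  have gi: "g integrable_on {0..1}" by (rule set_borel_integral_eq_integral(1)[OF gi0])
  have c: "continuous_on {0..1} (\<lambda>x. integral {0..x} g)" by (rule indefinite_integral_continuous_1[OF gi])
  have c2: "continuous_on {0..1} (\<lambda>x. u 0 + integral {0..x} g)"
    by (rule continuous_on_add[OF continuous_on_const c])
  show ?thesis
  proof (rule continuous_on_eq[OF c2])
    fix x :: real assume x: "x \<in> {0..1}"
    have gx: "set_integrable lborel {0..x} g" by (rule wd_int[OF assms]) (use x in auto)
    have e1: "(LINT t:{0..x}|lborel. g t) = integral {0..x} g"
      by (rule set_borel_integral_eq_integral(2)[OF gx])
    have e2: "u x = u 0 + (LINT t:{0..x}|lborel. g t)" using assms x unfolding is_weak_deriv_def by blast
    show "u 0 + integral {0..x} g = u x" using e1 e2 by simp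
  qed
qed

lemma H1_meas:
  assumes "u \<in> H1"
  shows "u \<in> borel_measurable lborel"
proof -
  have c: "continuous_on {0..1} u" using wd_cont H1_wd[OF assms] by blast
  have "(\<lambda>x. indicator {0..1::real} x *\<^sub>R u x) \<in> borel_measurable borel"
    by (rule borel_measurable_continuous_on_indicator[OF _ c]) auto
  moreover have "(\<lambda>x. indicator {0..1::real} x *\<^sub>R u x) = u"
    using assms by (auto simp: H1_def indicator_def fun_eq_iff)
  ultimately show ?thesis by simp
qed

lemma bdd_set_integrable:
  fixes f :: "real \<Rightarrow> 'b::{banach, second_countable_topology}"
  assumes [measurable]: "f \<in> borel_measurable lborel" and b: "\<And>t. t \<in> {a..b} \<Longrightarrow> norm (f t) \<le> C"
  shows "set_integrable lborel {a..b} f"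
proof (rule set_integrable_bound[where f = "\<lambda>_. C"])
  have "emeasure lborel {a..b} < \<infinity>" by (simp add: emeasure_lborel_Icc_eq)
  then have "integrable lborel (indicat_real {a..b})" by simp
  then show "set_integrable lborel {a..b} (\<lambda>_. C)"
    unfolding set_integrable_def real_scaleR_def by (rule integrable_mult_left)
  show "set_borel_measurable lborel {a..b} f" unfolding set_borel_measurable_def by measurable
  show "AE x in lborel. x \<in> {a..b} \<longrightarrow> norm (f x) \<le> norm C"
  proof (intro AE_I2 impI)
    fix x assume "x \<in> {a..b}"
    then have "norm (f x) \<le> C" by (rule b)
    then show "norm (f x) \<le> norm C" by simp
  qed
qed


definition phi :: "real \<Rightarrow> real \<Rightarrow> real \<Rightarrow> complex" where
  "phi a b x = (if x \<in> {0..1} then complex_of_real (max 0 (min x b - a) / (b - a)) else 0)"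

definition dphi :: "real \<Rightarrow> real \<Rightarrow> real \<Rightarrow> complex" where
  "dphi a b t = complex_of_real (indicator {a..b} t * (1 / (b - a)))"

lemma dphi_meas[measurable]: "dphi a b \<in> borel_measurable lborel"
  unfolding dphi_def by measurable

lemma phi_meas[measurable]: "phi a b \<in> borel_measurable lborel"
  unfolding phi_def by measurable

lemma set_int_indicator:
  fixes c d :: real and B :: "real set"
  assumes "B \<in> sets borel"
  shows "(LINT t:{c..d}|lborel. indicator B t) = measure lborel ({c..d} \<inter> B)"
proof -
  have "(\<lambda>t. indicator {c..d} t *\<^sub>R indicator B t) = (indicator ({c..d} \<inter> B) :: real \<Rightarrow> real)"
    by (auto simp: indicator_def fun_eq_iff)
  then show ?thesis unfolding set_lebesgue_integral_def by simp
qed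

lemma phi_wd:
  assumes ab: "0 < a" "a < b" "b < 1"
  shows "is_weak_deriv (phi a b) (dphi a b)"
  unfolding is_weak_deriv_def
proof (intro conjI ballI)
  show "dphi a b \<in> borel_measurable lborel" by measurable
  show "set_integrable lborel {0..1} (\<lambda>t. (cmod (dphi a b t))\<^sup>2)"
  proof (rule bdd_set_integrable[where C = "(1 / (b - a))\<^sup>2"])
    show "(\<lambda>t. (cmod (dphi a b t))\<^sup>2) \<in> borel_measurable lborel" by measurable
    fix t
    have "cmod (dphi a b t) \<le> 1 / (b - a)"
      unfolding dphi_def norm_of_real using ab by (auto simp: indicator_def)
    then show "norm ((cmod (dphi a b t))\<^sup>2) \<le> (1 / (b - a))\<^sup>2"
      by (simp add: power_mono)
  qed
  fix x :: real assume x: "x \<in> {0..1}"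
  have "(LINT t:{0..x}|lborel. dphi a b t) = of_real (LINT t:{0..x}|lborel. indicator {a..b} t * (1 / (b - a)))"
    unfolding dphi_def by (rule set_integral_complex_of_real)
  also have "(LINT t:{0..x}|lborel. indicator {a..b} t * (1 / (b - a))) = measure lborel ({0..x} \<inter> {a..b}) * (1 / (b - a))"
    by (simp add: set_int_indicator)
  also have "measure lborel ({0..x} \<inter> {a..b}) = max 0 (min x b - a)"
  proof (cases "x < a")
    case True
    then have "{0..x} \<inter> {a..b} = {}" by auto
    then show ?thesis using True by simp
  next
    case False
    then have "{0..x} \<inter> {a..b} = {a..min x b}" using ab by auto
    then show ?thesis using False ab by simp
  qed
  finally have "(LINT t:{0..x}|lborel. dphi a b t) = of_real (max 0 (min x b - a) / (b - a))" by simp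
  moreover have "phi a b 0 = 0" using ab by (simp add: phi_def)
  ultimately show "phi a b x = phi a b 0 + (LINT t:{0..x}|lborel. dphi a b t)"
    using x by (simp add: phi_def)
qed

lemma phi_0: "0 < a \<Longrightarrow> a < b \<Longrightarrow> phi a b 0 = 0"
  by (simp add: phi_def)

lemma phi_1: "a < b \<Longrightarrow> b < 1 \<Longrightarrow> phi a b 1 = 1"
  by (simp add: phi_def)

lemma phi_bdd: "a < b \<Longrightarrow> cmod (phi a b x) \<le> 1"
proof -
  assume ab: "a < b"
  have n: "0 \<le> max 0 (min x b - a)" by simp
  have m: "max 0 (min x b - a) \<le> b - a" using ab by simp
  have q0: "0 \<le> max 0 (min x b - a) / (b - a)" using n ab by simp
  have q1: "max 0 (min x b - a) / (b - a) \<le> 1" using m ab by (simp add: divide_le_eq)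
  have "\<bar>max 0 (min x b - a) / (b - a)\<bar> \<le> 1"
    using q0 q1 by simp
  then show ?thesis unfolding phi_def by (auto simp del: of_real_divide)
qed

lemma phi_H1:
  assumes ab: "0 < a" "a < b" "b < 1"
  shows "phi a b \<in> H1"
  unfolding H1_def
proof (intro CollectI conjI allI impI)
  show "\<exists>g. is_weak_deriv (phi a b) g" using phi_wd[OF ab] by blast
  fix x :: real assume "x \<notin> {0..1}" then show "phi a b x = 0" unfolding phi_def by (auto simp del: of_real_divide)
next
  show "set_integrable lborel {0..1} (\<lambda>t. (cmod (phi a b t))\<^sup>2)"
  proof (rule bdd_set_integrable[where C = 1])
    show "(\<lambda>t. (cmod (phi a b t))\<^sup>2) \<in> borel_measurable lborel" by measurable
    fix t
    have "cmod (phi a b t) \<le> 1" by (rule phi_bdd[OF ab(2)])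
    then show "norm ((cmod (phi a b t))\<^sup>2) \<le> 1"
      by (simp add: abs_square_le_1)
  qed
qed


lemma wd_sq: "is_weak_deriv u g \<Longrightarrow> set_integrable lborel {0..1} (\<lambda>t. (cmod (g t))\<^sup>2)"
  unfolding is_weak_deriv_def by blast

lemma wd_eq: "is_weak_deriv u g \<Longrightarrow> x \<in> {0..1} \<Longrightarrow> u x = u 0 + (LINT t:{0..x}|lborel. g t)"
  unfolding is_weak_deriv_def by blast

lemma H1_zero: "u \<in> H1 \<Longrightarrow> x \<notin> {0..1} \<Longrightarrow> u x = 0"
  unfolding H1_def by blast

lemma H1_sq: "u \<in> H1 \<Longrightarrow> set_integrable lborel {0..1} (\<lambda>t. (cmod (u t))\<^sup>2)"
  unfolding H1_def by blast

lemma sq_ineq: "(cmod (x + y))\<^sup>2 \<le> 2 * (cmod x)\<^sup>2 + 2 * (cmod y)\<^sup>2"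
proof -
  have "cmod (x + y) \<le> cmod x + cmod y" by (rule norm_triangle_ineq)
  then have "(cmod (x + y))\<^sup>2 \<le> (cmod x + cmod y)\<^sup>2" by (simp add: power_mono)
  also have "\<dots> \<le> 2 * (cmod x)\<^sup>2 + 2 * (cmod y)\<^sup>2"
  proof -
    have "0 \<le> (cmod x - cmod y)\<^sup>2" by simp
    then show ?thesis by (simp add: power2_eq_square algebra_simps)
  qed
  finally show ?thesis .
qed

lemma sqint_add:
  fixes f k :: "real \<Rightarrow> complex"
  assumes [measurable]: "f \<in> borel_measurable lborel" "k \<in> borel_measurable lborel"
    and sf: "set_integrable lborel {0..1} (\<lambda>t. (cmod (f t))\<^sup>2)"
    and sk: "set_integrable lborel {0..1} (\<lambda>t. (cmod (k t))\<^sup>2)"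
  shows "set_integrable lborel {0..1} (\<lambda>t. (cmod (f t + k t))\<^sup>2)"
proof (rule set_integrable_bound[where f = "\<lambda>t. 2 * (cmod (f t))\<^sup>2 + 2 * (cmod (k t))\<^sup>2"])
  show "set_integrable lborel {0..1} (\<lambda>t. 2 * (cmod (f t))\<^sup>2 + 2 * (cmod (k t))\<^sup>2)"
    by (rule set_integral_add(1)) (use sf sk in auto)
  show "set_borel_measurable lborel {0..1} (\<lambda>t. (cmod (f t + k t))\<^sup>2)"
    unfolding set_borel_measurable_def by measurable
  show "AE x in lborel. x \<in> {0..1} \<longrightarrow> norm ((cmod (f x + k x))\<^sup>2) \<le> norm (2 * (cmod (f x))\<^sup>2 + 2 * (cmod (k x))\<^sup>2)"
  proof (intro AE_I2 impI)
    fix x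
    have "(cmod (f x + k x))\<^sup>2 \<le> 2 * (cmod (f x))\<^sup>2 + 2 * (cmod (k x))\<^sup>2" by (rule sq_ineq)
    then show "norm ((cmod (f x + k x))\<^sup>2) \<le> norm (2 * (cmod (f x))\<^sup>2 + 2 * (cmod (k x))\<^sup>2)"
      by simp
  qed
qed

lemma sqint_scale:
  fixes f :: "real \<Rightarrow> complex"
  assumes sf: "set_integrable lborel {0..1} (\<lambda>t. (cmod (f t))\<^sup>2)"
  shows "set_integrable lborel {0..1} (\<lambda>t. (cmod (d * f t))\<^sup>2)"
proof -
  have "(\<lambda>t. (cmod (d * f t))\<^sup>2) = (\<lambda>t. (cmod d)\<^sup>2 * (cmod (f t))\<^sup>2)"
    by (simp add: norm_mult power_mult_distrib)
  then show ?thesis using sf by simp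
qed

lemma wd_add:
  assumes u: "is_weak_deriv u g" and v: "is_weak_deriv v h"
  shows "is_weak_deriv (\<lambda>x. u x + v x) (\<lambda>t. g t + h t)"
  unfolding is_weak_deriv_def
proof (intro conjI ballI)
  have [measurable]: "g \<in> borel_measurable lborel" "h \<in> borel_measurable lborel"
    using wd_meas[OF u] wd_meas[OF v] .
  show "(\<lambda>t. g t + h t) \<in> borel_measurable lborel" by measurable
  show "set_integrable lborel {0..1} (\<lambda>t. (cmod (g t + h t))\<^sup>2)"
    by (rule sqint_add) (use wd_sq[OF u] wd_sq[OF v] in auto)
  fix x :: real assume x: "x \<in> {0..1}"
  have i: "set_integrable lborel {0..x} g" "set_integrable lborel {0..x} h"
    using wd_int[OF u, of 0 x] wd_int[OF v, of 0 x] x by auto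
  have "(LINT t:{0..x}|lborel. g t + h t) = (LINT t:{0..x}|lborel. g t) + (LINT t:{0..x}|lborel. h t)"
    by (rule set_integral_add(2)[OF i])
  then show "u x + v x = u 0 + v 0 + (LINT t:{0..x}|lborel. g t + h t)"
    using wd_eq[OF u x] wd_eq[OF v x] by simp
qed

lemma wd_scale:
  assumes v: "is_weak_deriv v h"
  shows "is_weak_deriv (\<lambda>x. d * v x) (\<lambda>t. d * h t)"
  unfolding is_weak_deriv_def
proof (intro conjI ballI)
  have [measurable]: "h \<in> borel_measurable lborel"
    using wd_meas[OF v] .
  show "(\<lambda>t. d * h t) \<in> borel_measurable lborel" by measurable
  show "set_integrable lborel {0..1} (\<lambda>t. (cmod (d * h t))\<^sup>2)"
    by (rule sqint_scale[OF wd_sq[OF v]])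
  fix x :: real assume x: "x \<in> {0..1}"
  show "d * v x = d * v 0 + (LINT t:{0..x}|lborel. d * h t)"
    using wd_eq[OF v x] by (simp add: algebra_simps)
qed

lemma H1_add:
  assumes u: "u \<in> H1" and v: "v \<in> H1"
  shows "(\<lambda>x. u x + v x) \<in> H1"
  unfolding H1_def
proof (intro CollectI conjI allI impI)
  fix x :: real assume "x \<notin> {0..1}"
  then show "u x + v x = 0" using H1_zero[OF u] H1_zero[OF v] by simp
next
  show "set_integrable lborel {0..1} (\<lambda>t. (cmod (u t + v t))\<^sup>2)"
    by (rule sqint_add[OF H1_meas[OF u] H1_meas[OF v] H1_sq[OF u] H1_sq[OF v]])
  show "\<exists>g. is_weak_deriv (\<lambda>x. u x + v x) g"
    using wd_add[OF H1_wd[OF u] H1_wd[OF v]] by blast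
qed

lemma H1_scale:
  assumes v: "v \<in> H1"
  shows "(\<lambda>x. d * v x) \<in> H1"
  unfolding H1_def
proof (intro CollectI conjI allI impI)
  fix x :: real assume "x \<notin> {0..1}"
  then show "d * v x = 0" using H1_zero[OF v] by simp
next
  show "set_integrable lborel {0..1} (\<lambda>t. (cmod (d * v t))\<^sup>2)"
    by (rule sqint_scale[OF H1_sq[OF v]])
  show "\<exists>g. is_weak_deriv (\<lambda>x. d * v x) g"
    using wd_scale[OF H1_wd[OF v]] by blast
qed


lemma set_int_nonneg:
  fixes f :: "real \<Rightarrow> real"
  assumes "\<And>t. 0 \<le> f t"
  shows "0 \<le> (LINT t:A|lborel. f t)"
  unfolding set_lebesgue_integral_def
  by (rule integral_nonneg_AE) (use assms in \<open>auto intro!: AE_I2 simp: indicator_def\<close>)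

lemma set_int_const01: "(LINT (t::real):{0..1}|lborel. (c::real)) = c"
  using set_integral_const[of "{0..1::real}" lborel c] by (simp add: emeasure_lborel_Icc_eq)

lemma phi_norm:
  assumes ab: "0 < a" "a < b" "b < 1"
  shows "H1norm (\<lambda>x. d * phi a b x) \<le> cmod d * sqrt (1 + 1 / (b - a)\<^sup>2)"
proof -
  have w: "is_weak_deriv (\<lambda>x. d * phi a b x) (\<lambda>t. d * dphi a b t)"
    by (rule wd_scale[OF phi_wd[OF ab]])
  have I1: "(LINT t:{0..1}|lborel. (cmod (d * phi a b t))\<^sup>2) \<le> (LINT (t::real):{0..1}|lborel. (cmod d)\<^sup>2)"
  proof (rule set_integral_mono)
    show "set_integrable lborel {0..1} (\<lambda>t. (cmod (d * phi a b t))\<^sup>2)"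
      by (rule sqint_scale[OF H1_sq[OF phi_H1[OF ab]]])
    show "set_integrable lborel {0..1::real} (\<lambda>t. (cmod d)\<^sup>2)"
      by (rule bdd_set_integrable[where C = "(cmod d)\<^sup>2"]) auto
    fix t :: real assume "t \<in> {0..1}"
    have "cmod (phi a b t) \<le> 1" by (rule phi_bdd[OF ab(2)])
    then have "cmod d * cmod (phi a b t) \<le> cmod d" by (simp add: mult_left_le)
    then show "(cmod (d * phi a b t))\<^sup>2 \<le> (cmod d)\<^sup>2"
      by (simp add: norm_mult power_mono)
  qed
  have I2: "(LINT t:{0..1}|lborel. (cmod (d * dphi a b t))\<^sup>2) \<le> (LINT (t::real):{0..1}|lborel. (cmod d * (1 / (b - a)))\<^sup>2)"
  proof (rule set_integral_mono)
    show "set_integrable lborel {0..1} (\<lambda>t. (cmod (d * dphi a b t))\<^sup>2)"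
      by (rule wd_sq[OF w])
    show "set_integrable lborel {0..1::real} (\<lambda>t. (cmod d * (1 / (b - a)))\<^sup>2)"
      by (rule bdd_set_integrable[where C = "(cmod d * (1 / (b - a)))\<^sup>2"]) auto
    fix t :: real assume "t \<in> {0..1}"
    have "cmod (dphi a b t) \<le> 1 / (b - a)"
      unfolding dphi_def norm_of_real using ab by (auto simp: indicator_def)
    then have "cmod d * cmod (dphi a b t) \<le> cmod d * (1 / (b - a))" by (rule mult_left_mono) simp
    then show "(cmod (d * dphi a b t))\<^sup>2 \<le> (cmod d * (1 / (b - a)))\<^sup>2"
      by (simp add: norm_mult power_mono)
  qed
  have "H1norm (\<lambda>x. d * phi a b x) = sqrt ((LINT t:{0..1}|lborel. (cmod (d * phi a b t))\<^sup>2) + (LINT t:{0..1}|lborel. (cmod (d * dphi a b t))\<^sup>2))"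
    by (rule H1norm_wd[OF w])
  also have "\<dots> \<le> sqrt ((cmod d)\<^sup>2 + (cmod d * (1 / (b - a)))\<^sup>2)"
    using I1 I2 unfolding set_int_const01 by (simp add: add_mono)
  also have "(cmod d)\<^sup>2 + (cmod d * (1 / (b - a)))\<^sup>2 = (cmod d)\<^sup>2 * (1 + 1 / (b - a)\<^sup>2)"
    by (simp add: power_mult_distrib algebra_simps power_divide)
  also have "sqrt \<dots> = cmod d * sqrt (1 + 1 / (b - a)\<^sup>2)"
    by (simp add: real_sqrt_mult)
  finally show ?thesis .
qed

lemma V_bound:
  assumes ppos: "\<forall>x. p x > 0" and a: "0 < \<alpha>" "\<alpha> < 1"
    and v: "v \<in> Vspace p \<alpha> \<beta> \<theta>"
  shows "\<alpha> * (cmod (v 0))\<^sup>2 \<le> (H1norm v)\<^sup>2"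
proof -
  have vH: "v \<in> H1" using v by (simp add: Vspace_def H1theta_def)
  have vae: "AE t in lborel. t \<in> Q1 \<alpha> \<beta> \<longrightarrow> complex_of_real (p t) * h1deriv v t = 0"
    using v by (simp add: Vspace_def)
  define g where "g = h1deriv v"
  have w: "is_weak_deriv v g" unfolding g_def by (rule H1_wd[OF vH])
  have [measurable]: "g \<in> borel_measurable lborel" by (rule wd_meas[OF w])
  have [measurable]: "v \<in> borel_measurable lborel" by (rule H1_meas[OF vH])
  have gae: "AE t in lborel. t \<in> {0..\<alpha>} \<longrightarrow> g t = 0"
    using vae AE_lborel_singleton[of 0] AE_lborel_singleton[of \<alpha>]
  proof eventually_elim
    case (elim t)
    show ?case
    proof
      assume t: "t \<in> {0..\<alpha>}"
      then have "t \<in> Q1 \<alpha> \<beta>" using elim by (auto simp: Q1_def)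
      then have "complex_of_real (p t) * g t = 0" using elim by (simp add: g_def)
      moreover have "complex_of_real (p t) \<noteq> 0" using ppos by (metis of_real_eq_0_iff less_irrefl)
      ultimately show "g t = 0" by simp
    qed
  qed
  have vconst: "v x = v 0" if x: "x \<in> {0..\<alpha>}" for x
  proof -
    have "(LINT t:{0..x}|lborel. g t) = (LINT t:{0..x}|lborel. (0::complex))"
    proof (rule set_lebesgue_integral_cong_AE)
      show "{0..x} \<in> sets lborel" by simp
      show "g \<in> borel_measurable lborel" by measurable
      show "(\<lambda>t. 0::complex) \<in> borel_measurable lborel" by simp
      show "AE t\<in>{0..x} in lborel. g t = 0"
        using gae by eventually_elim (use x in auto)
    qed
    then have "(LINT t:{0..x}|lborel. g t) = 0" by (simp add: set_lebesgue_integral_def)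
    then show ?thesis using wd_eq[OF w, of x] x a by simp
  qed
  have "(LINT t:{0..1}|lborel. indicator {0..\<alpha>} t * (cmod (v 0))\<^sup>2) \<le> (LINT t:{0..1}|lborel. (cmod (v t))\<^sup>2)"
  proof (rule set_integral_mono)
    show "set_integrable lborel {0..1} (\<lambda>t. indicator {0..\<alpha>} t * (cmod (v 0))\<^sup>2)"
      by (rule bdd_set_integrable[where C = "(cmod (v 0))\<^sup>2"]) (auto simp: indicator_def)
    show "set_integrable lborel {0..1} (\<lambda>t. (cmod (v t))\<^sup>2)" by (rule H1_sq[OF vH])
    fix t :: real assume "t \<in> {0..1}"
    show "indicator {0..\<alpha>} t * (cmod (v 0))\<^sup>2 \<le> (cmod (v t))\<^sup>2"
      using vconst[of t] by (auto simp: indicator_def)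
  qed
  moreover have "(LINT t:{0..1}|lborel. indicator {0..\<alpha>} t * (cmod (v 0))\<^sup>2) = \<alpha> * (cmod (v 0))\<^sup>2"
  proof -
    have "{0..1} \<inter> {0..\<alpha>} = {0..\<alpha>}" using a by auto
    then show ?thesis using a by (simp add: set_int_indicator)
  qed
  moreover have "0 \<le> (LINT t:{0..1}|lborel. (cmod (g t))\<^sup>2)" by (rule set_int_nonneg) simp
  moreover have "0 \<le> (LINT t:{0..1}|lborel. (cmod (v t))\<^sup>2)" by (rule set_int_nonneg) simp
  moreover have "(H1norm v)\<^sup>2 = (LINT t:{0..1}|lborel. (cmod (v t))\<^sup>2) + (LINT t:{0..1}|lborel. (cmod (g t))\<^sup>2)"
    using calculation by (simp add: H1norm_wd[OF w])
  ultimately show ?thesis by linarith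
qed


lemma module_cscale: "module cscale"
  by unfold_locales (auto simp: cscale_def fun_eq_iff algebra_simps)

definition Tmap :: "real \<Rightarrow> real \<Rightarrow> complex \<Rightarrow> (real \<Rightarrow> complex) \<Rightarrow> (real \<Rightarrow> complex)" where
  "Tmap a b c u = (\<lambda>x. u x + (c * u 0) * phi a b x)"

lemma Tmap_hom: "module_hom cscale cscale (Tmap a b c)"
  unfolding module_hom_iff using module_cscale
  by (auto simp: Tmap_def cscale_def fun_eq_iff algebra_simps)

lemma Tmap_0: "0 < a \<Longrightarrow> a < b \<Longrightarrow> Tmap a b c u 0 = u 0"
  by (simp add: Tmap_def phi_0)

lemma Tmap_inj: "0 < a \<Longrightarrow> a < b \<Longrightarrow> inj (Tmap a b c)"
proof (rule injI)
  fix u v assume ab: "0 < a" "a < b" and e: "Tmap a b c u = Tmap a b c v"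
  have "u 0 = v 0" using Tmap_0[OF ab, of c u] Tmap_0[OF ab, of c v] e by simp
  then show "u = v" using e by (auto simp: Tmap_def fun_eq_iff)
qed

lemma Tmap_diff1: "u - Tmap a b c u = (\<lambda>x. (- (c * u 0)) * phi a b x)"
  by (simp add: Tmap_def fun_eq_iff)

lemma Tmap_diff2: "Tmap a b c u - u = (\<lambda>x. (c * u 0) * phi a b x)"
  by (simp add: Tmap_def fun_eq_iff)

definition ee :: "real \<Rightarrow> complex" where "ee \<theta> = exp (2 * pi * \<i> * complex_of_real \<theta>)"

lemma Tmap_V:
  assumes ppos: "\<forall>x. p x > 0" and ab: "0 < \<alpha>" "\<alpha> < \<beta>" "\<beta> < 1"
    and u: "u \<in> Vspace p \<alpha> \<beta> \<theta>1"
  shows "Tmap \<alpha> \<beta> (ee \<theta>2 - ee \<theta>1) u \<in> Vspace p \<alpha> \<beta> \<theta>2"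
proof -
  define c where "c = ee \<theta>2 - ee \<theta>1"
  have uH: "u \<in> H1" using u by (simp add: Vspace_def H1theta_def)
  have u1: "u 1 = ee \<theta>1 * u 0" using u by (simp add: Vspace_def H1theta_def ee_def)
  have uae: "AE t in lborel. t \<in> Q1 \<alpha> \<beta> \<longrightarrow> complex_of_real (p t) * h1deriv u t = 0"
    using u by (simp add: Vspace_def)
  have TH: "Tmap \<alpha> \<beta> c u \<in> H1"
    unfolding Tmap_def by (rule H1_add[OF uH H1_scale[OF phi_H1[OF ab]]])
  have T1: "Tmap \<alpha> \<beta> c u 1 = ee \<theta>2 * Tmap \<alpha> \<beta> c u 0"
    using u1 ab by (simp add: Tmap_def phi_1 phi_0 c_def algebra_simps)
  define g where "g = h1deriv u"
  have wu: "is_weak_deriv u g" unfolding g_def by (rule H1_wd[OF uH])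
  have wT: "is_weak_deriv (Tmap \<alpha> \<beta> c u) (\<lambda>t. g t + (c * u 0) * dphi \<alpha> \<beta> t)"
    unfolding Tmap_def by (rule wd_add[OF wu wd_scale[OF phi_wd[OF ab]]])
  have un: "AE t in lborel. t \<in> {0..1} \<longrightarrow> h1deriv (Tmap \<alpha> \<beta> c u) t = g t + (c * u 0) * dphi \<alpha> \<beta> t"
    by (rule wd_unique[OF H1_wd[OF TH] wT])
  have "AE t in lborel. t \<in> Q1 \<alpha> \<beta> \<longrightarrow> complex_of_real (p t) * h1deriv (Tmap \<alpha> \<beta> c u) t = 0"
    using un uae
  proof eventually_elim
    case (elim t)
    show ?case
    proof
      assume t: "t \<in> Q1 \<alpha> \<beta>"
      then have t01: "t \<in> {0..1}" and tn: "t \<notin> {\<alpha>..\<beta>}" using ab by (auto simp: Q1_def)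
      have "complex_of_real (p t) * g t = 0" using elim t by (simp add: g_def)
      moreover have "complex_of_real (p t) \<noteq> 0" using ppos by (metis of_real_eq_0_iff less_irrefl)
      ultimately have "g t = 0" by simp
      moreover have "dphi \<alpha> \<beta> t = 0" using tn by (simp add: dphi_def)
      ultimately show "complex_of_real (p t) * h1deriv (Tmap \<alpha> \<beta> c u) t = 0"
        using elim t01 by simp
    qed
  qed
  then show ?thesis
    using TH T1 unfolding Vspace_def H1theta_def c_def ee_def by simp
qed


lemma H1norm_nonneg: "0 \<le> H1norm u"
  unfolding H1norm_def by (intro real_sqrt_ge_zero add_nonneg_nonneg set_int_nonneg) simp_all

lemma u0_bound:
  assumes ppos: "\<forall>x. p x > 0" and a: "0 < \<alpha>" "\<alpha> < 1"
    and v: "v \<in> Vspace p \<alpha> \<beta> \<theta>" and n: "H1norm v = 1"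
  shows "cmod (v 0) \<le> 1 / sqrt \<alpha>"
proof -
  have "\<alpha> * (cmod (v 0))\<^sup>2 \<le> 1" using V_bound[OF ppos a v] n by simp
  then have "(cmod (v 0))\<^sup>2 \<le> 1 / \<alpha>" using a by (simp add: field_simps)
  then have "cmod (v 0) \<le> sqrt (1 / \<alpha>)" by (rule real_le_rsqrt)
  then show ?thesis by (simp add: real_sqrt_divide)
qed

lemma step_bound:
  assumes ab: "0 < \<alpha>" "\<alpha> < \<beta>" "\<beta> < 1" and z: "cmod z \<le> 1 / sqrt \<alpha>"
    and cd: "cmod d = cmod c * cmod z" and bnd: "cmod c * (1 / sqrt \<alpha>) * sqrt (1 + 1 / (\<beta> - \<alpha>)\<^sup>2) \<le> B"
  shows "H1norm (\<lambda>x. d * phi \<alpha> \<beta> x) \<le> B"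
proof -
  have "H1norm (\<lambda>x. d * phi \<alpha> \<beta> x) \<le> cmod d * sqrt (1 + 1 / (\<beta> - \<alpha>)\<^sup>2)"
    by (rule phi_norm[OF ab])
  also have "\<dots> = cmod c * cmod z * sqrt (1 + 1 / (\<beta> - \<alpha>)\<^sup>2)" using cd by simp
  also have "\<dots> \<le> cmod c * (1 / sqrt \<alpha>) * sqrt (1 + 1 / (\<beta> - \<alpha>)\<^sup>2)"
    by (intro mult_right_mono mult_left_mono z) auto
  also have "\<dots> \<le> B" by (rule bnd)
  finally show ?thesis .
qed

theorem proposition5p1:
  fixes p :: "real \<Rightarrow> real" and \<alpha> \<beta> \<theta>1 \<epsilon> :: real and k :: nat
    and F1 :: "(real \<Rightarrow> complex) set"
  assumes p_periodic: "\<forall>x. p (x + 1) = p x"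
    and p_meas: "p \<in> borel_measurable lborel"
    and p_pos: "\<forall>x. p x > 0"
    and p_Linf: "\<exists>C. AE x in lborel. x \<in> {0..1} \<longrightarrow> \<bar>p x\<bar> \<le> C"
    and p_inv_Linf: "\<exists>C. AE x in lborel. x \<in> {0..1} \<longrightarrow> \<bar>1 / p x\<bar> \<le> C"
    and "0 < \<alpha>" and "\<alpha> < \<beta>" and "\<beta> < 1"
    and "\<theta>1 \<in> {0..<1}"
    and "lin_subspace F1" and "F1 \<subseteq> Vspace p \<alpha> \<beta> \<theta>1" and "has_dim F1 k"
    and "\<epsilon> > 0"
  shows "\<exists>\<delta>>0. \<forall>\<theta>2\<in>{0..<1}. \<bar>\<theta>2 - \<theta>1\<bar> \<le> \<delta> \<longrightarrow>
           (\<exists>F2. lin_subspace F2 \<and> F2 \<subseteq> Vspace p \<alpha> \<beta> \<theta>2 \<and> has_dim F2 k \<and>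
                 max (subsp_dist F1 F2) (subsp_dist F2 F1) < \<epsilon>)"
proof -
  note ab = assms(6,7,8)
  have a1: "\<alpha> < 1" using ab by simp
  define K where "K = sqrt (1 + 1 / (\<beta> - \<alpha>)\<^sup>2)"
  have K: "K > 0" unfolding K_def by (simp add: add_pos_nonneg)
  have sa: "sqrt \<alpha> > 0" using ab by simp
  define \<eta> where "\<eta> = \<epsilon> * sqrt \<alpha> / (2 * K)"
  have \<eta>: "\<eta> > 0" unfolding \<eta>_def using K sa assms(13) by simp
  have "isCont ee \<theta>1" unfolding ee_def by (intro continuous_intros)
  then obtain d0 where d0: "d0 > 0" "\<And>y. dist y \<theta>1 < d0 \<Longrightarrow> dist (ee y) (ee \<theta>1) < \<eta>"
    using continuous_at_eps_delta \<eta> by blast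
  show ?thesis
  proof (intro exI[of _ "d0 / 2"] conjI ballI impI)
    show "d0 / 2 > 0" using d0 by simp
    fix \<theta>2 assume \<theta>2: "\<theta>2 \<in> {0..<1}" and cl: "\<bar>\<theta>2 - \<theta>1\<bar> \<le> d0 / 2"
    define c where "c = ee \<theta>2 - ee \<theta>1"
    have "dist \<theta>2 \<theta>1 < d0" using cl d0 by (simp add: dist_real_def)
    then have cc: "cmod c \<le> \<eta>" using d0(2)[of \<theta>2] by (simp add: c_def dist_norm)
    have bnd: "cmod c * (1 / sqrt \<alpha>) * K \<le> \<epsilon> / 2"
    proof -
      have "cmod c * (1 / sqrt \<alpha>) * K \<le> \<eta> * (1 / sqrt \<alpha>) * K"
        using cc K sa by (intro mult_right_mono) auto
      also have "\<eta> * (1 / sqrt \<alpha>) * K = \<epsilon> / 2" unfolding \<eta>_def using K sa by (simp add: field_simps)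
      finally show ?thesis .
    qed
    define T where "T = Tmap \<alpha> \<beta> c"
    define F2 where "F2 = T ` F1"
    have hom: "module_hom cscale cscale T" unfolding T_def by (rule Tmap_hom)
    have inj: "inj T" unfolding T_def using ab by (simp add: Tmap_inj)
    have F1V: "u \<in> Vspace p \<alpha> \<beta> \<theta>1" if "u \<in> F1" for u using assms(11) that by blast
    have TV: "T u \<in> Vspace p \<alpha> \<beta> \<theta>2" if "u \<in> F1" for u
      unfolding T_def c_def by (rule Tmap_V[OF p_pos ab F1V[OF that]])
    have T0: "T u 0 = u 0" for u unfolding T_def using ab by (simp add: Tmap_0)
    have bddb: "bdd_below ((\<lambda>v. H1norm (w - v)) ` S)" for w S
      by (rule bdd_belowI[where m = 0]) (auto simp: H1norm_nonneg)
    have dist1: "subsp_dist F1 F2 \<le> \<epsilon> / 2"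
    proof (cases "{u \<in> F1. H1norm u = 1} = {}")
      case True then show ?thesis using assms(13) by (simp add: subsp_dist_def)
    next
      case False
      have "(SUP u\<in>{u \<in> F1. H1norm u = 1}. INF v\<in>F2. H1norm (u - v)) \<le> \<epsilon> / 2"
      proof (rule cSUP_least[OF False])
        fix u assume u: "u \<in> {u \<in> F1. H1norm u = 1}"
        have "(INF v\<in>F2. H1norm (u - v)) \<le> H1norm (u - T u)"
          by (rule cINF_lower[OF bddb]) (use u in \<open>simp add: F2_def\<close>)
        also have "H1norm (u - T u) = H1norm (\<lambda>x. (- (c * u 0)) * phi \<alpha> \<beta> x)"
          unfolding T_def by (simp only: Tmap_diff1)
        also have "\<dots> \<le> \<epsilon> / 2"
        proof (rule step_bound[OF ab _ _ bnd[unfolded K_def]])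
          show "cmod (u 0) \<le> 1 / sqrt \<alpha>" using u0_bound[OF p_pos ab(1) a1 F1V] u by simp
          show "cmod (- (c * u 0)) = cmod c * cmod (u 0)" by (simp add: norm_mult)
        qed
        finally show "(INF v\<in>F2. H1norm (u - v)) \<le> \<epsilon> / 2" .
      qed
      then show ?thesis unfolding subsp_dist_def if_not_P[OF False] .
    qed
    have dist2: "subsp_dist F2 F1 \<le> \<epsilon> / 2"
    proof (cases "{u \<in> F2. H1norm u = 1} = {}")
      case True then show ?thesis using assms(13) by (simp add: subsp_dist_def)
    next
      case False
      have "(SUP w\<in>{u \<in> F2. H1norm u = 1}. INF v\<in>F1. H1norm (w - v)) \<le> \<epsilon> / 2"
      proof (rule cSUP_least[OF False])
        fix w assume w: "w \<in> {u \<in> F2. H1norm u = 1}"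
        then obtain u where u: "u \<in> F1" and wu: "w = T u" by (auto simp: F2_def)
        have "(INF v\<in>F1. H1norm (w - v)) \<le> H1norm (w - u)"
          by (rule cINF_lower[OF bddb u])
        also have "H1norm (w - u) = H1norm (\<lambda>x. (c * u 0) * phi \<alpha> \<beta> x)"
          unfolding wu T_def by (simp only: Tmap_diff2)
        also have "\<dots> \<le> \<epsilon> / 2"
        proof (rule step_bound[OF ab _ _ bnd[unfolded K_def]])
          have "cmod (w 0) \<le> 1 / sqrt \<alpha>"
            using u0_bound[OF p_pos ab(1) a1 TV[OF u]] w wu by simp
          then show "cmod (u 0) \<le> 1 / sqrt \<alpha>" using wu T0 by simp
          show "cmod (c * u 0) = cmod c * cmod (u 0)" by (simp add: norm_mult)
        qed
        finally show "(INF v\<in>F1. H1norm (w - v)) \<le> \<epsilon> / 2" .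
      qed
      then show ?thesis unfolding subsp_dist_def if_not_P[OF False] .
    qed
    show "\<exists>F2. lin_subspace F2 \<and> F2 \<subseteq> Vspace p \<alpha> \<beta> \<theta>2 \<and> has_dim F2 k \<and>
                 max (subsp_dist F1 F2) (subsp_dist F2 F1) < \<epsilon>"
    proof (intro exI[of _ F2] conjI)
      show "lin_subspace F2"
        unfolding lin_subspace_def F2_def
        by (rule module_hom.subspace_image[OF hom]) (use assms(10) in \<open>simp add: lin_subspace_def\<close>)
      show "F2 \<subseteq> Vspace p \<alpha> \<beta> \<theta>2" unfolding F2_def using TV by blast
      show "max (subsp_dist F1 F2) (subsp_dist F2 F1) < \<epsilon>"
        using dist1 dist2 assms(13) by simp
      obtain B where B: "finite B" "card B = k" "\<not> module.dependent cscale B" "module.span cscale B = F1"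
        using assms(12) unfolding has_dim_def by blast
      show "has_dim F2 k"
        unfolding has_dim_def
      proof (intro exI[of _ "T ` B"] conjI)
        show "finite (T ` B)" using B by simp
        show "card (T ` B) = k" using B inj by (simp add: card_image inj_on_subset)
        show "\<not> module.dependent cscale (T ` B)"
          by (rule module_hom.independent_injective_image[OF hom B(3)]) (rule inj_on_subset[OF inj subset_UNIV])
        show "module.span cscale (T ` B) = F2"
          unfolding F2_def using module_hom.span_image[OF hom, of B] B(4) by simp
      qed
    qed
  qed
qed


end
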